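(* Let $n\ge2$, $j\ge0$, $b\in B$, $(\mu_i)_{i=1}^n\in\mathbb Z^n$ and $\mu=-2\mu_1\Lambda_0+(\mu_1-\mu_2)\Lambda_1+\cdots+(\mu_{n-1}-\mu_n)\Lambda_{n-1}+2\mu_n\Lambda_n$. Then $$g_j(b,\mu)=\sum_\gamma q^{\sum_{i\in B,\,i\ne0,\phi}\gamma_i(\gamma_i-1)+\sum_{i\in B}H(b\otimes i)\gamma_i}\begin{bmatrix}j\\ \gamma\end{bmatrix}_{q^2},$$ the sum over $\gamma=(\gamma_i)_{i\in B}\in\mathbb Z_{\ge0}^{2n+2}$ with $\gamma_i-\gamma_{\bar i}=\mu_i$ for $i=1,\dots,n$ and $\sum_{i\in B}\gamma_i=j$.
   Context: Affine algebra $D^{(2)}_{n+1}$ with fundamental weights $\Lambda_0,\dots,\Lambda_n$, $P_{cl}=\bigoplus\mathbb Z\Lambda_i$. $B=\{1,\dots,n,0,\bar n,\dots,\bar1,\phi\}$; on $B\setminus\{\phi\}$ the total order $1\prec\cdots\prec n\prec0\prec\bar n\prec\cdots\prec\bar1$. Weights: $wt(\bar b)=-wt(b)$, $wt(1)=\Lambda_1-2\Lambda_0$, $wt(b)=\Lambda_b-\Lambda_{b-1}$ for $2\le b\le n-1$, $wt(n)=2\Lambda_n-\Lambda_{n-1}$, $wt(0)=wt(\phi)=0$. Energy function: $H(b\otimes b')=0$ if $b,b'\ne\phi$ and $b\prec b'$, or $(b,b')\in\{(0,0),(\phi,\phi)\}$; $H(b\otimes b')=1$ if exactly one of $b,b'$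 is $\phi$; $H(b\otimes b')=2$ if $b,b'\ne\phi$, $b\succeq b'$ and $(b,b')\ne(0,0)$. For $j\ge0$, $b\in B$, $\mu\in P_{cl}$: $g_j(b,\mu)=\sum q^{\sum_{i=1}^j iH(b_{i+1}\otimes b_i)}$, summed over $(b_j,\dots,b_1)\in B^j$ with $wt(b_j)+\cdots+wt(b_1)=\mu$, where $b_{j+1}=b$. For an integer vector $\gamma=(\gamma_b)_{b\in B}$: $\begin{bmatrix}j\\ \gamma\end{bmatrix}_{x}=(x)_j/\prod_{b\in B}(x)_{\gamma_b}$ if $\sum_b\gamma_b=j$ and all $\gamma_b\ge0$, and $0$ otherwise; $(x)_m=\prod_{i=1}^m(1-x^i)$. *)

theory Defs
  imports "HOL-Computational_Algebra.Polynomial"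
begin

text \<open>Elements of the crystal B = {1,...,n,0,nbar,...,1bar,phi}.
  U i is the letter i (1 <= i <= n), Bar i is the letter ibar, Z0 is 0, Phi is phi.\<close>
datatype elt = U nat | Z0 | Bar nat | Phi

definition Bset :: "nat \<Rightarrow> elt set" where
  "Bset n = U ` {1..n} \<union> {Z0} \<union> Bar ` {1..n} \<union> {Phi}"

text \<open>Position in the total order 1 < ... < n < 0 < nbar < ... < 1bar (Phi excluded).\<close>
fun pos :: "nat \<Rightarrow> elt \<Rightarrow> nat" where
  "pos n (U i) = i"
| "pos n Z0 = n + 1"
| "pos n (Bar i) = 2 * n + 2 - i"
| "pos n Phi = 0"

definition H :: "nat \<Rightarrow> elt \<Rightarrow> elt \<Rightarrow> nat" where
  "H n b b' =
     (if b = Phi \<and> b' = Phi then 0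
      else if b = Phi \<or> b' = Phi then 1
      else if b = Z0 \<and> b' = Z0 then 0
      else if pos n b < pos n b' then 0
      else 2)"

text \<open>Weights in P_cl, represented as coefficient functions k \<mapsto> coefficient of Lambda_k
  (zero for k > n).\<close>
definition wtU :: "nat \<Rightarrow> nat \<Rightarrow> nat \<Rightarrow> int" where
  "wtU n i k =
     (if i = 1 then (if k = 1 then 1 else if k = 0 then -2 else 0)
      else if i = n then (if k = n then 2 else if k = n - 1 then -1 else 0)
      else (if k = i then 1 else if k = i - 1 then -1 else 0))"

fun wt :: "nat \<Rightarrow> elt \<Rightarrow> nat \<Rightarrow> int" where
  "wt n (U i) = wtU n i"
| "wt n (Bar i) = (\<lambda>k. - wtU n i k)"
| "wt n Z0 = (\<lambda>k. 0)"
| "wt n Phi = (\<lambda>k. 0)"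

definition muwt :: "nat \<Rightarrow> (nat \<Rightarrow> int) \<Rightarrow> nat \<Rightarrow> int" where
  "muwt n m k =
     (if k = 0 then -2 * m 1
      else if k < n then m k - m (k + 1)
      else if k = n then 2 * m n
      else 0)"

text \<open>q is the polynomial indeterminate; the generating function g_j(b, mu).
  A tuple (b_j,...,b_1) is encoded as a list xs of length j with xs ! (i-1) = b_i,
  and b_{j+1} = b.\<close>
abbreviation qvar :: "int poly" where "qvar \<equiv> [:0, 1:]"

definition g :: "nat \<Rightarrow> nat \<Rightarrow> elt \<Rightarrow> (nat \<Rightarrow> int) \<Rightarrow> int poly" where
  "g n j b mu =
     (\<Sum>xs\<in>{xs. length xs = j \<and> set xs \<subseteq> Bset n \<and>
                (\<lambda>k. \<Sum>y\<leftarrow>xs. wt n y k) = mu}.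
        qvar ^ (\<Sum>i=1..j. i * H n (if i = j then b else xs ! i) (xs ! (i - 1))))"

definition qpoch :: "int poly \<Rightarrow> nat \<Rightarrow> int poly" where
  "qpoch x m = (\<Prod>i=1..m. 1 - x ^ i)"

definition qmultinom :: "int poly \<Rightarrow> elt set \<Rightarrow> nat \<Rightarrow> (elt \<Rightarrow> int) \<Rightarrow> int poly" where
  "qmultinom x Bs j \<gamma> =
     (if (\<Sum>b\<in>Bs. \<gamma> b) = int j \<and> (\<forall>b\<in>Bs. \<gamma> b \<ge> 0)
      then qpoch x j div (\<Prod>b\<in>Bs. qpoch x (nat (\<gamma> b)))
      else 0)"

end

theory Submission
  imports Defs
begin


lemma finite_Bset[simp]: "finite (Bset n)" by (simp add: Bset_def)

lemma Phi_in[simp]: "Phi \<in> Bset n" and Z0_in[simp]: "Z0 \<in> Bset n"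
  by (auto simp: Bset_def)

lemma U_in[simp]: "U i \<in> Bset n \<longleftrightarrow> 1 \<le> i \<and> i \<le> n"
  and Bar_in[simp]: "Bar i \<in> Bset n \<longleftrightarrow> 1 \<le> i \<and> i \<le> n"
  by (auto simp: Bset_def)

definition lt :: "nat \<Rightarrow> nat \<Rightarrow> elt" where
  "lt n k = (if k \<le> n then U k else if k = n + 1 then Z0 else Bar (2*n+2-k))"

lemma lt_in: "k \<in> {1..2*n+1} \<Longrightarrow> lt n k \<in> Bset n - {Phi}"
  by (auto simp: lt_def)

lemma pos_lt: "k \<in> {1..2*n+1} \<Longrightarrow> pos n (lt n k) = k"
  by (auto simp: lt_def)

lemma lt_pos: "x \<in> Bset n - {Phi} \<Longrightarrow> lt n (pos n x) = x \<and> pos n x \<in> {1..2*n+1}"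
  by (cases x) (auto simp: lt_def)

lemma bij_lt: "bij_betw (lt n) {1..2*n+1} (Bset n - {Phi})"
proof (rule bij_betw_byWitness[where f'="pos n"])
  show "\<forall>a\<in>{1..2*n+1}. pos n (lt n a) = a" using pos_lt by simp
  show "\<forall>a'\<in>Bset n - {Phi}. lt n (pos n a') = a'" using lt_pos by simp
  show "lt n ` {1..2*n+1} \<subseteq> Bset n - {Phi}" using lt_in by (simp add: image_subset_iff)
  show "pos n ` (Bset n - {Phi}) \<subseteq> {1..2*n+1}" using lt_pos by (simp add: image_subset_iff)
qed

lemma H_nonphi: "x \<noteq> Phi \<Longrightarrow> y \<noteq> Phi \<Longrightarrow>
   H n x y = (if x = Z0 \<and> y = Z0 then 0 else if pos n x < pos n y then 0 else 2)"
  by (simp add: H_def)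

lemma H_lt: assumes that: "k \<in> {1..2*n+1}" "l \<in> {1..2*n+1}" shows "
   H n (lt n k) (lt n l) = (if k = n+1 \<and> l = n+1 then 0 else if k < l then 0 else 2)"
proof -
  have z: "m \<in> {1..2*n+1} \<Longrightarrow> lt n m = Z0 \<longleftrightarrow> m = n+1" for m by (auto simp: lt_def)
  have "lt n k \<noteq> Phi" "lt n l \<noteq> Phi" using lt_in[of k n] lt_in[of l n] that by auto
  then show ?thesis using H_nonphi[of "lt n k" "lt n l" n] z[of k] z[of l] pos_lt[of k n] pos_lt[of l n] that
    by simp
qed

lemma wtU_muwt:
  assumes "n \<ge> 2" "1 \<le> i" "i \<le> n"
  shows "wtU n i k = muwt n (\<lambda>l. if l = i then 1 else 0) k"
proof -
  consider "i = 1" | "i = n" | "1 < i \<and> i < n" using assms by linarith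
  then show ?thesis
  proof cases
    case 1
    then show ?thesis using assms
      by (cases "k = 0"; cases "k = 1"; cases "k < n"; cases "k = n"; simp add: wtU_def muwt_def; linarith)
  next
    case 2
    then show ?thesis using assms
      by (cases "k = 0"; cases "k = n - 1"; cases "k < n"; cases "k = n"; simp add: wtU_def muwt_def; linarith)
  next
    case 3
    then show ?thesis using assms
      by (cases "k = 0"; cases "k = i"; cases "k = i - 1"; cases "k < n"; cases "k = n"; simp add: wtU_def muwt_def; linarith)
  qed
qed

definition cntd :: "elt list \<Rightarrow> nat \<Rightarrow> int" where
  "cntd xs i = int (count_list xs (U i)) - int (count_list xs (Bar i))"

lemma muwt_add: "muwt n (\<lambda>l. u l + v l) k = muwt n u k + muwt n v k"
  by (simp add: muwt_def algebra_simps)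

lemma muwt_diff: "muwt n (\<lambda>l. u l - v l) k = muwt n u k - muwt n v k"
  by (simp add: muwt_def algebra_simps)

lemma muwt_zero: "muwt n (\<lambda>l. 0) k = 0"
  by (simp add: muwt_def)

lemma muwt_neg: "muwt n (\<lambda>l. - f l) k = - muwt n f k"
  by (simp add: muwt_def algebra_simps)

lemma wt_sum:
  assumes "n \<ge> 2" "set xs \<subseteq> Bset n"
  shows "(\<Sum>y\<leftarrow>xs. wt n y k) = muwt n (cntd xs) k"
  using assms(2)
proof (induction xs)
  case Nil
  then show ?case by (simp add: cntd_def muwt_zero)
next
  case (Cons a xs)
  have ih: "(\<Sum>y\<leftarrow>xs. wt n y k) = muwt n (cntd xs) k" using Cons by auto
  have a: "a \<in> Bset n" using Cons by auto
  show ?case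
  proof (cases a)
    case (U i)
    have "cntd (a#xs) = (\<lambda>l. (if l = i then 1 else 0) + cntd xs l)"
      by (auto simp: cntd_def U)
    then show ?thesis using ih a U wtU_muwt[OF assms(1), of i k] by (simp add: muwt_add)
  next
    case Z0
    have "cntd (a#xs) = cntd xs" by (auto simp: cntd_def Z0)
    then show ?thesis using ih Z0 by simp
  next
    case (Bar i)
    have "cntd (a#xs) = (\<lambda>l. - (if l = i then 1 else 0) + cntd xs l)"
      by (auto simp: cntd_def Bar)
    then show ?thesis using ih a Bar wtU_muwt[OF assms(1), of i k] by (simp add: muwt_diff)
  next
    case Phi
    have "cntd (a#xs) = cntd xs" by (auto simp: cntd_def Phi)
    then show ?thesis using ih Phi by simp
  qed
qed

lemma muwt_cong: "n \<ge> 1 \<Longrightarrow> (\<And>i. i \<in> {1..n} \<Longrightarrow> u i = v i) \<Longrightarrow> muwt n u = muwt n v"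
  by (rule ext) (auto simp: muwt_def)

lemma muwt_inj:
  assumes "n \<ge> 1" "muwt n f = muwt n v" "i \<in> {1..n}"
  shows "f i = v i"
proof -
  have "\<forall>i. n - i = d \<longrightarrow> 1 \<le> i \<longrightarrow> i \<le> n \<longrightarrow> f i = v i" for d
  proof (induction d)
    case 0
    show ?case
    proof (intro allI impI)
      fix i assume "n - i = 0" "1 \<le> i" "i \<le> n"
      then have "i = n" by simp
      have "muwt n f n = muwt n v n" using assms(2) by simp
      then show "f i = v i" using \<open>i = n\<close> assms(1) by (simp add: muwt_def)
    qed
  next
    case (Suc d)
    show ?case
    proof (intro allI impI)
      fix i assume h: "n - i = Suc d" "1 \<le> i" "i \<le> n"
      then have "f (i+1) = v (i+1)" using Suc.IH by auto
      moreover have "muwt n f i = muwt n v i" using assms(2) by simp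
      moreover have "i < n" using h by linarith
      ultimately show "f i = v i" using h by (simp add: muwt_def)
    qed
  qed
  then show ?thesis using assms(3) by auto
qed



fun En :: "nat \<Rightarrow> elt \<Rightarrow> elt list \<Rightarrow> nat" where
  "En n b [] = 0"
| "En n b (a # ws) = Suc (length ws) * H n b a + En n a ws"

lemma energy_rev:
  "(\<Sum>i=1..length xs. i * H n (if i = length xs then b else xs ! i) (xs ! (i - 1))) = En n b (rev xs)"
proof (induction xs arbitrary: b rule: rev_induct)
  case Nil
  show ?case by simp
next
  case (snoc a xs)
  let ?L = "length xs"
  have "(\<Sum>i=1..length (xs@[a]). i * H n (if i = length (xs@[a]) then b else (xs@[a]) ! i) ((xs@[a]) ! (i - 1)))
      = (\<Sum>i=1..?L. i * H n (if i = Suc ?L then b else (xs@[a]) ! i) ((xs@[a]) ! (i - 1))) + Suc ?L * H n b a"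
    by (simp add: nth_append)
  also have "(\<Sum>i=1..?L. i * H n (if i = Suc ?L then b else (xs@[a]) ! i) ((xs@[a]) ! (i - 1)))
      = (\<Sum>i=1..?L. i * H n (if i = ?L then a else xs ! i) (xs ! (i - 1)))"
    by (rule sum.cong) (auto simp: nth_append)
  also have "\<dots> = En n a (rev xs)" by (rule snoc.IH)
  finally show ?case by simp
qed

definition Wd :: "nat \<Rightarrow> nat \<Rightarrow> (elt \<Rightarrow> nat) \<Rightarrow> elt list set" where
  "Wd n j c = {ws. length ws = j \<and> set ws \<subseteq> Bset n \<and> (\<forall>x. count_list ws x = c x)}"

lemma finite_Wd: "finite (Wd n j c)"
proof -
  have "Wd n j c \<subseteq> {xs. set xs \<subseteq> Bset n \<and> length xs = j}" by (auto simp: Wd_def)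
  then show ?thesis using finite_lists_length_eq[OF finite_Bset] finite_subset by blast
qed

definition Fw :: "nat \<Rightarrow> nat \<Rightarrow> elt \<Rightarrow> (elt \<Rightarrow> nat) \<Rightarrow> int poly" where
  "Fw n j b c = (\<Sum>ws\<in>Wd n j c. qvar ^ En n b ws)"

lemma Wd_Suc: "Wd n (Suc j) c =
   (\<lambda>(a,ws). a # ws) ` (SIGMA a:{a\<in>Bset n. 0 < c a}. Wd n j (c(a := c a - 1)))"
proof
  show "Wd n (Suc j) c \<subseteq> (\<lambda>(a,ws). a # ws) ` (SIGMA a:{a\<in>Bset n. 0 < c a}. Wd n j (c(a := c a - 1)))"
  proof
    fix zs assume z: "zs \<in> Wd n (Suc j) c"
    then obtain a ws where zs: "zs = a # ws" by (cases zs) (auto simp: Wd_def)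
    have "count_list zs a = c a" using z unfolding Wd_def by blast
    then have ca: "c a = Suc (count_list ws a)" by (simp add: zs)
    have "ws \<in> Wd n j (c(a := c a - 1))"
    proof -
      have "count_list ws x = (c(a := c a - 1)) x" for x
        using z zs ca by (auto simp: Wd_def split: if_splits)
      then show ?thesis using z zs by (auto simp: Wd_def)
    qed
    moreover have "a \<in> Bset n" using z zs by (auto simp: Wd_def)
    ultimately show "zs \<in> (\<lambda>(a,ws). a # ws) ` (SIGMA a:{a\<in>Bset n. 0 < c a}. Wd n j (c(a := c a - 1)))"
      using zs ca by force
  qed
next
  show "(\<lambda>(a,ws). a # ws) ` (SIGMA a:{a\<in>Bset n. 0 < c a}. Wd n j (c(a := c a - 1))) \<subseteq> Wd n (Suc j) c"
  proof
    fix zs assume "zs \<in> (\<lambda>(a,ws). a # ws) ` (SIGMA a:{a\<in>Bset n. 0 < c a}. Wd n j (c(a := c a - 1)))"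
    then obtain a ws where zs: "zs = a # ws" and a: "a \<in> Bset n" "0 < c a"
      and ws: "ws \<in> Wd n j (c(a := c a - 1))" by auto
    have "count_list zs x = c x" for x
      using ws a zs by (auto simp: Wd_def)
    then show "zs \<in> Wd n (Suc j) c" using ws a zs by (auto simp: Wd_def)
  qed
qed

lemma Fw_Suc: "Fw n (Suc j) b c =
  (\<Sum>a\<in>{a\<in>Bset n. 0 < c a}. qvar ^ (Suc j * H n b a) * Fw n j a (c(a := c a - 1)))"
proof -
  have inj: "inj_on (\<lambda>(a,ws). a # ws) S" for S :: "(elt \<times> elt list) set"
    by (auto simp: inj_on_def)
  have "Fw n (Suc j) b c = (\<Sum>p\<in>(SIGMA a:{a\<in>Bset n. 0 < c a}. Wd n j (c(a := c a - 1))).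
           (\<lambda>(a,ws). qvar ^ En n b (a # ws)) p)"
    unfolding Fw_def Wd_Suc by (subst sum.reindex[OF inj]) (auto simp: o_def split: prod.splits intro!: sum.cong)
  also have "\<dots> = (\<Sum>a\<in>{a\<in>Bset n. 0 < c a}. \<Sum>ws\<in>Wd n j (c(a := c a - 1)). qvar ^ En n b (a # ws))"
    by (rule sum.Sigma[symmetric]) (auto simp: finite_Wd)
  also have "\<dots> = (\<Sum>a\<in>{a\<in>Bset n. 0 < c a}. qvar ^ (Suc j * H n b a) * Fw n j a (c(a := c a - 1)))"
  proof (rule sum.cong[OF refl])
    fix a
    have "(\<Sum>ws\<in>Wd n j (c(a := c a - 1)). qvar ^ En n b (a # ws))
        = (\<Sum>ws\<in>Wd n j (c(a := c a - 1)). qvar ^ (Suc j * H n b a) * qvar ^ En n a ws)"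
      by (rule sum.cong[OF refl]) (simp add: Wd_def power_add)
    then show "(\<Sum>ws\<in>Wd n j (c(a := c a - 1)). qvar ^ En n b (a # ws))
        = qvar ^ (Suc j * H n b a) * Fw n j a (c(a := c a - 1))"
      by (simp add: Fw_def sum_distrib_left)
  qed
  finally show ?thesis .
qed



definition Qf :: "nat \<Rightarrow> (elt \<Rightarrow> nat) \<Rightarrow> nat" where
  "Qf n c = (\<Sum>i\<in>Bset n - {Z0, Phi}. c i * (c i - 1))"
definition Sf :: "nat \<Rightarrow> elt \<Rightarrow> (elt \<Rightarrow> nat) \<Rightarrow> nat" where
  "Sf n b c = (\<Sum>i\<in>Bset n. H n b i * c i)"
definition dd :: "nat \<Rightarrow> elt \<Rightarrow> (elt \<Rightarrow> nat) \<Rightarrow> nat" where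
  "dd n a c = (\<Sum>i\<in>Bset n - {a}. H n a i * c i)"
definition Pc :: "nat \<Rightarrow> (elt \<Rightarrow> nat) \<Rightarrow> nat \<Rightarrow> nat" where
  "Pc n c k = (\<Sum>l\<in>{1..k}. c (lt n l))"

lemma dd_Sf: "a \<in> Bset n \<Longrightarrow> dd n a c + H n a a * c a = Sf n a c"
  unfolding dd_def Sf_def using sum.remove[OF finite_Bset, of a n "\<lambda>i. H n a i * c i"] by simp

lemma H_self: "H n a a = (if a = Z0 \<or> a = Phi then 0 else 2)"
  by (simp add: H_def)

lemma QS:
  assumes a: "a \<in> Bset n" and ca: "0 < c a"
  shows "Qf n (c(a := c a - 1)) + Sf n a (c(a := c a - 1)) = Qf n c + dd n a c"
proof -
  let ?c = "c(a := c a - 1)"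
  have dd': "dd n a ?c = dd n a c" unfolding dd_def by (rule sum.cong) auto
  have S': "Sf n a ?c = dd n a c + H n a a * (c a - 1)"
    using dd_Sf[OF a, of ?c] dd' by simp
  show ?thesis
  proof (cases "a = Z0 \<or> a = Phi")
    case True
    have "Qf n ?c = Qf n c" unfolding Qf_def by (rule sum.cong) (use True in auto)
    then show ?thesis using S' True by (simp add: H_self)
  next
    case False
    have aa: "a \<in> Bset n - {Z0, Phi}" using False a by auto
    have q1: "Qf n c = (\<Sum>i\<in>Bset n - {Z0, Phi} - {a}. c i * (c i - 1)) + c a * (c a - 1)"
      unfolding Qf_def using sum.remove[of "Bset n - {Z0, Phi}" a "\<lambda>i. c i * (c i - 1)"] aa by simp
    have q2: "Qf n ?c = (\<Sum>i\<in>Bset n - {Z0, Phi} - {a}. c i * (c i - 1)) + (c a - 1) * (c a - 1 - 1)"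
    proof -
      have "Qf n ?c = (\<Sum>i\<in>Bset n - {Z0, Phi} - {a}. ?c i * (?c i - 1)) + ?c a * (?c a - 1)"
        unfolding Qf_def using sum.remove[of "Bset n - {Z0, Phi}" a "\<lambda>i. ?c i * (?c i - 1)"] aa by simp
      also have "(\<Sum>i\<in>Bset n - {Z0, Phi} - {a}. ?c i * (?c i - 1)) = (\<Sum>i\<in>Bset n - {Z0, Phi} - {a}. c i * (c i - 1))"
        by (rule sum.cong) auto
      finally show ?thesis by (simp only: fun_upd_same)
    qed
    obtain k where k: "c a = Suc k" using ca by (cases "c a") auto
    have e: "k * (k - 1) + 2 * k = Suc k * k" by (cases k) (auto simp: algebra_simps)
    show ?thesis using q1 q2 S' False k e by (simp add: H_self)
  qed
qed

lemma sum_Bs_split: "(\<Sum>a\<in>Bset n. F a) = F Phi + (\<Sum>k\<in>{1..2*n+1}. F (lt n k))"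
  using sum.remove[OF finite_Bset Phi_in, of F] sum.reindex_bij_betw[OF bij_lt, of F] by simp

lemma Pc_Suc: "Pc n c (Suc k) = Pc n c k + c (lt n (Suc k))"
  by (simp add: Pc_def)

lemma lt_ne_Phi: "k \<in> {1..2*n+1} \<Longrightarrow> lt n k \<noteq> Phi"
  using lt_in by blast

lemma H_Phi_lt: "k \<in> {1..2*n+1} \<Longrightarrow> H n Phi (lt n k) = 1"
  and H_lt_Phi: "k \<in> {1..2*n+1} \<Longrightarrow> H n (lt n k) Phi = 1"
  using lt_ne_Phi by (auto simp: H_def)

lemma T_eq: "sum c (Bset n) = c Phi + Pc n c (2*n+1)"
  using sum_Bs_split[of c n] by (simp add: Pc_def)

lemma Sf_Phi: "Sf n Phi c = Pc n c (2*n+1)"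
proof -
  have "Sf n Phi c = H n Phi Phi * c Phi + (\<Sum>k\<in>{1..2*n+1}. H n Phi (lt n k) * c (lt n k))"
    unfolding Sf_def by (rule sum_Bs_split)
  also have "\<dots> = Pc n c (2*n+1)" unfolding Pc_def
    by (auto simp: H_def lt_ne_Phi intro!: sum.cong)
  finally show ?thesis .
qed

lemma dd_Phi: "dd n Phi c = Pc n c (2*n+1)"
  using dd_Sf[of Phi n c] Sf_Phi[of n c] by (simp add: H_def)

definition mp :: "nat \<Rightarrow> nat \<Rightarrow> nat" where
  "mp n m = (if m = n + 1 then m - 1 else m)"

lemma H_lt_lt: "m \<in> {1..2*n+1} \<Longrightarrow> k \<in> {1..2*n+1} \<Longrightarrow>
   H n (lt n m) (lt n k) = (if k \<le> mp n m then 2 else 0)"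
  using H_lt[of m n k] by (auto simp: mp_def)

lemma Sf_lt:
  assumes m: "m \<in> {1..2*n+1}"
  shows "Sf n (lt n m) c = c Phi + 2 * Pc n c (mp n m)"
proof -
  have mp: "mp n m \<le> 2*n+1" using m by (auto simp: mp_def)
  have "Sf n (lt n m) c = H n (lt n m) Phi * c Phi + (\<Sum>k\<in>{1..2*n+1}. H n (lt n m) (lt n k) * c (lt n k))"
    unfolding Sf_def by (rule sum_Bs_split)
  also have "(\<Sum>k\<in>{1..2*n+1}. H n (lt n m) (lt n k) * c (lt n k))
      = (\<Sum>k\<in>{1..2*n+1}. if k \<le> mp n m then 2 * c (lt n k) else 0)"
    by (rule sum.cong) (auto simp: H_lt_lt[OF m])
  also have "\<dots> = (\<Sum>k\<in>{k\<in>{1..2*n+1}. k \<le> mp n m}. 2 * c (lt n k))"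
    by (rule sum.inter_filter[symmetric]) simp
  also have "{k\<in>{1..2*n+1}. k \<le> mp n m} = {1..mp n m}" using mp by auto
  finally show ?thesis using H_lt_Phi[OF m] by (simp add: Pc_def sum_distrib_left)
qed

lemma dd_lt:
  assumes k: "k \<in> {1..2*n+1}"
  shows "dd n (lt n k) c = c Phi + 2 * Pc n c (k - 1)"
proof -
  have s: "dd n (lt n k) c + H n (lt n k) (lt n k) * c (lt n k) = c Phi + 2 * Pc n c (mp n k)"
    using dd_Sf[of "lt n k" n c] Sf_lt[OF k, of c] lt_in[OF k] by simp
  have hk: "H n (lt n k) (lt n k) = (if k = n + 1 then 0 else 2)"
    using H_lt[OF k k] by simp
  have pk: "Pc n c k = Pc n c (k - 1) + c (lt n k)"
    using Pc_Suc[of n c "k - 1"] k by simp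
  show ?thesis using s hk pk by (auto simp: mp_def split: if_splits)
qed

lemma tel0: "(\<Sum>k\<in>{1..m::nat}. (f (k - 1) - f k :: 'a :: comm_ring_1)) = f 0 - f m"
  by (induction m) (auto simp: algebra_simps)

lemma tel1:
  assumes "m \<le> (N::nat)"
  shows "(\<Sum>k\<in>{1..N}. (if k \<le> m then A else 1) * (f (k - 1) - f k :: 'a :: comm_ring_1))
         = A * (f 0 - f m) + (f m - f N)"
  using assms
proof (induction N rule: dec_induct)
  case base
  have "(\<Sum>k\<in>{1..m}. (if k \<le> m then A else 1) * (f (k - 1) - f k)) = (\<Sum>k\<in>{1..m}. A * (f (k - 1) - f k))"
    by (rule sum.cong) auto
  then show ?case using tel0[of f m] by (simp add: sum_distrib_left[symmetric])
next
  case (step N)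
  then show ?case by (simp add: algebra_simps)
qed



lemma key:
  assumes b: "b \<in> Bset n"
  shows "(\<Sum>a\<in>Bset n. qvar ^ (sum c (Bset n) * H n b a + dd n a c) * (1 - qvar ^ (2 * c a)))
         = qvar ^ (Sf n b c) * (1 - qvar ^ (2 * sum c (Bset n)))"
proof -
  define T where "T = sum c (Bset n)"
  define N where "N = 2*n+1"
  define P where "P = Pc n c N"
  define f where "f k = qvar ^ (2 * Pc n c k)" for k
  define X where "X = qvar ^ P"
  define Y where "Y = qvar ^ (c Phi)"
  have TE: "T = c Phi + P" using T_eq[of c n] by (simp add: T_def P_def N_def)
  have trm: "qvar ^ (T * H n b (lt n k) + dd n (lt n k) c) * (1 - qvar ^ (2 * c (lt n k)))
     = qvar ^ (T * H n b (lt n k)) * Y * (f (k - 1) - f k)" if k: "k \<in> {1..N}" for k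
  proof -
    have pk: "Pc n c k = Pc n c (k - 1) + c (lt n k)" using Pc_Suc[of n c "k - 1"] k by simp
    show ?thesis unfolding f_def Y_def using dd_lt[of k n c] k pk
      by (simp add: N_def power_add algebra_simps)
  qed
  have split: "(\<Sum>a\<in>Bset n. qvar ^ (T * H n b a + dd n a c) * (1 - qvar ^ (2 * c a)))
     = qvar ^ (T * H n b Phi + P) * (1 - Y^2)
       + (\<Sum>k\<in>{1..N}. qvar ^ (T * H n b (lt n k)) * Y * (f (k - 1) - f k))"
    unfolding sum_Bs_split[of _ n] using trm
    by (simp add: dd_Phi P_def N_def Y_def power_mult[symmetric] mult.commute[of 2])
  have f0: "f 0 = 1" by (simp add: f_def Pc_def)
  have fN: "f N = X^2" by (simp add: f_def X_def P_def power_mult[symmetric] mult.commute[of 2])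
  have T2: "qvar ^ (2 * T) = X^2 * Y^2"
    by (simp add: TE X_def Y_def power_add power_mult[symmetric] mult.commute[of 2] algebra_simps)
  show ?thesis
  proof (cases "b = Phi")
    case True
    have "(\<Sum>k\<in>{1..N}. qvar ^ (T * H n b (lt n k)) * Y * (f (k - 1) - f k))
        = (\<Sum>k\<in>{1..N}. (qvar ^ T * Y) * (f (k - 1) - f k))"
      by (rule sum.cong) (auto simp: True H_Phi_lt N_def)
    also have "\<dots> = qvar ^ T * Y * (f 0 - f N)"
      using tel0[of f N] by (simp add: sum_distrib_left[symmetric])
    finally have s: "(\<Sum>k\<in>{1..N}. qvar ^ (T * H n b (lt n k)) * Y * (f (k - 1) - f k))
        = X * Y * Y * (1 - X^2)" using f0 fN by (simp add: TE X_def Y_def power_add)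
    have "qvar ^ (T * H n b Phi + P) = X" by (simp add: True H_def X_def)
    moreover have "qvar ^ Sf n b c = X" by (simp add: True Sf_Phi X_def P_def N_def)
    ultimately show ?thesis using split s T2 unfolding T_def[symmetric]
      by (simp add: algebra_simps power2_eq_square)
  next
    case False
    define m where "m = pos n b"
    have m: "m \<in> {1..N}" "b = lt n m" using lt_pos[of b n] b False by (auto simp: m_def N_def)
    define m' where "m' = mp n m"
    have m'N: "m' \<le> N" using m by (auto simp: m'_def mp_def)
    define Z where "Z = qvar ^ Pc n c m'"
    have "(\<Sum>k\<in>{1..N}. qvar ^ (T * H n b (lt n k)) * Y * (f (k - 1) - f k))
        = (\<Sum>k\<in>{1..N}. Y * ((if k \<le> m' then qvar ^ (2 * T) else 1) * (f (k - 1) - f k)))"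
      by (rule sum.cong) (use m in \<open>auto simp: H_lt_lt m'_def N_def mult.commute[of T]\<close>)
    also have "\<dots> = Y * (qvar ^ (2 * T) * (f 0 - f m') + (f m' - f N))"
      using tel1[OF m'N, of "qvar ^ (2 * T)" f] by (simp add: sum_distrib_left[symmetric])
    finally have s: "(\<Sum>k\<in>{1..N}. qvar ^ (T * H n b (lt n k)) * Y * (f (k - 1) - f k))
        = Y * (X^2 * Y^2 * (1 - Z^2) + (Z^2 - X^2))"
      using f0 fN T2 by (simp add: f_def Z_def power_mult[symmetric] mult.commute[of 2])
    have "qvar ^ (T * H n b Phi + P) = X^2 * Y"
      using H_lt_Phi[of m n] m by (simp add: N_def X_def Y_def TE power_add power2_eq_square)
    moreover have "qvar ^ Sf n b c = Y * Z^2" using Sf_lt[of m n c] m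
      by (simp add: N_def Y_def Z_def m'_def power_add power_mult[symmetric] mult.commute[of 2])
    ultimately show ?thesis using split s T2 unfolding T_def[symmetric]
      by (simp add: algebra_simps power2_eq_square)
  qed
qed



definition Dp :: "nat \<Rightarrow> (elt \<Rightarrow> nat) \<Rightarrow> int poly" where
  "Dp n c = (\<Prod>i\<in>Bset n. qpoch (qvar^2) (c i))"

lemma qpoch_Suc: "qpoch x (Suc k) = qpoch x k * (1 - x ^ Suc k)"
  by (simp add: qpoch_def)

lemma qpoch_0: "qpoch x 0 = 1"
  by (simp add: qpoch_def)

lemma Dp_dec:
  assumes a: "a \<in> Bset n" and ca: "0 < c a"
  shows "Dp n c = Dp n (c(a := c a - 1)) * (1 - qvar ^ (2 * c a))"
proof -
  let ?c = "c(a := c a - 1)"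
  have r: "(\<Prod>i\<in>Bset n - {a}. qpoch (qvar^2) (?c i)) = (\<Prod>i\<in>Bset n - {a}. qpoch (qvar^2) (c i))"
    by (rule prod.cong) auto
  have d1: "Dp n c = qpoch (qvar^2) (c a) * (\<Prod>i\<in>Bset n - {a}. qpoch (qvar^2) (c i))"
    unfolding Dp_def by (rule prod.remove[OF finite_Bset a])
  have d2: "Dp n ?c = qpoch (qvar^2) (c a - 1) * (\<Prod>i\<in>Bset n - {a}. qpoch (qvar^2) (c i))"
    unfolding Dp_def using prod.remove[OF finite_Bset a, of "\<lambda>i. qpoch (qvar^2) (?c i)"] r by simp
  have eq: "qpoch (qvar^2) (c a) = qpoch (qvar^2) (c a - 1) * (1 - qvar ^ (2 * c a))"
    using qpoch_Suc[of "qvar^2" "c a - 1"] ca by (simp add: power_mult)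
  show ?thesis unfolding d1 d2 by (simp only: eq mult_ac)
qed

lemma sum_dec:
  fixes c :: "elt \<Rightarrow> nat"
  assumes a: "a \<in> Bset n" and ca: "0 < c a"
  shows "sum (c(a := c a - 1)) (Bset n) = sum c (Bset n) - 1"
proof -
  have "sum c (Bset n) = c a + sum c (Bset n - {a})"
    by (rule sum.remove[OF finite_Bset a])
  moreover have "sum (c(a := c a - 1)) (Bset n) = (c a - 1) + sum c (Bset n - {a})"
  proof -
    have "sum (c(a := c a - 1)) (Bset n - {a}) = sum c (Bset n - {a})" by (rule sum.cong) auto
    then show ?thesis using sum.remove[OF finite_Bset a, of "c(a := c a - 1)"] by simp
  qed
  moreover obtain k where "c a = Suc k" using ca by (cases "c a") auto
  ultimately show ?thesis by simp
qed

lemma main: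
  "\<forall>b c. b \<in> Bset n \<longrightarrow> (\<forall>x. x \<notin> Bset n \<longrightarrow> c x = 0) \<longrightarrow> sum c (Bset n) = j \<longrightarrow>
     Fw n j b c * Dp n c = qvar ^ (Qf n c + Sf n b c) * qpoch (qvar^2) j"
proof (induction j)
  case 0
  show ?case
  proof (intro allI impI)
    fix b and c :: "elt \<Rightarrow> nat" assume b: "b \<in> Bset n" and supp: "\<forall>x. x \<notin> Bset n \<longrightarrow> c x = 0" and s: "sum c (Bset n) = 0"
    have c0: "c x = 0" for x using supp s sum_eq_0_iff[OF finite_Bset, of c n] by (cases "x \<in> Bset n") auto
    have W: "Wd n 0 c = {[]}" by (auto simp: Wd_def c0)
    show "Fw n 0 b c * Dp n c = qvar ^ (Qf n c + Sf n b c) * qpoch (qvar^2) 0"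
      by (simp add: Fw_def W Dp_def Qf_def Sf_def c0 qpoch_0)
  qed
next
  case (Suc j)
  show ?case
  proof (intro allI impI)
    fix b and c :: "elt \<Rightarrow> nat" assume b: "b \<in> Bset n" and supp: "\<forall>x. x \<notin> Bset n \<longrightarrow> c x = 0" and s: "sum c (Bset n) = Suc j"
    let ?A = "{a\<in>Bset n. 0 < c a}"
    let ?g = "\<lambda>a. qvar ^ (Suc j * H n b a + dd n a c) * (1 - qvar ^ (2 * c a))"
    have "Fw n (Suc j) b c * Dp n c =
        (\<Sum>a\<in>?A. qvar ^ (Suc j * H n b a) * Fw n j a (c(a := c a - 1)) * Dp n c)"
      by (simp add: Fw_Suc sum_distrib_right)
    also have "\<dots> = (\<Sum>a\<in>?A. qvar ^ Qf n c * qpoch (qvar^2) j * ?g a)"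
    proof (rule sum.cong[OF refl])
      fix a assume "a \<in> ?A"
      then have a: "a \<in> Bset n" and ca: "0 < c a" by auto
      let ?c = "c(a := c a - 1)"
      have IH: "Fw n j a ?c * Dp n ?c = qvar ^ (Qf n ?c + Sf n a ?c) * qpoch (qvar^2) j"
        using Suc.IH a supp sum_dec[of a n c, OF a ca] s by auto
      have "qvar ^ (Suc j * H n b a) * Fw n j a ?c * Dp n c
          = qvar ^ (Suc j * H n b a) * (Fw n j a ?c * Dp n ?c) * (1 - qvar ^ (2 * c a))"
        unfolding Dp_dec[of a n c, OF a ca] by (simp only: mult_ac)
      also have "\<dots> = qvar ^ (Suc j * H n b a) * qvar ^ (Qf n c + dd n a c) * qpoch (qvar^2) j * (1 - qvar ^ (2 * c a))"
        by (simp only: IH QS[of a n c, OF a ca] mult.assoc)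
      also have "\<dots> = qvar ^ Qf n c * qpoch (qvar^2) j * ?g a"
        by (simp only: power_add mult_ac)
      finally show "qvar ^ (Suc j * H n b a) * Fw n j a ?c * Dp n c = qvar ^ Qf n c * qpoch (qvar^2) j * ?g a" .
    qed
    also have "\<dots> = qvar ^ Qf n c * qpoch (qvar^2) j * (\<Sum>a\<in>?A. ?g a)"
      by (simp add: sum_distrib_left)
    also have "(\<Sum>a\<in>?A. ?g a) = (\<Sum>a\<in>Bset n. ?g a)"
      by (rule sum.mono_neutral_left) auto
    also have "\<dots> = qvar ^ (Sf n b c) * (1 - qvar ^ (2 * Suc j))"
      using key[OF b, of c] s by simp
    finally have fin: "Fw n (Suc j) b c * Dp n c = qvar ^ Qf n c * qpoch (qvar^2) j * (qvar ^ (Sf n b c) * (1 - qvar ^ (2 * Suc j)))" .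
    then show "Fw n (Suc j) b c * Dp n c = qvar ^ (Qf n c + Sf n b c) * qpoch (qvar^2) (Suc j)"
    proof -
      have "qpoch (qvar^2) (Suc j) = qpoch (qvar^2) j * (1 - qvar^(2*Suc j))"
        by (simp only: qpoch_Suc power_mult)
      then show ?thesis using fin by (simp only: power_add mult_ac)
    qed
  qed
qed



lemma qpow_dvd:
  fixes F D :: "int poly"
  assumes D0: "poly D 0 \<noteq> 0"
  shows "qvar ^ e dvd F * D \<Longrightarrow> qvar ^ e dvd F"
proof (induction e arbitrary: F)
  case 0
  then show ?case by simp
next
  case (Suc e)
  have "qvar dvd F * D" using Suc.prems by (metis dvd_mult_left power_Suc)
  then have "poly (F * D) 0 = 0" using dvd_iff_poly_eq_0[of 0 "F * D"] by simp
  then have "poly F 0 = 0" using D0 by simp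
  then have "qvar dvd F" using dvd_iff_poly_eq_0[of 0 F] by simp
  then obtain F1 where F1: "F = qvar * F1" by (elim dvdE)
  have "qvar * qvar ^ e dvd qvar * (F1 * D)" using Suc.prems F1 by (simp add: mult.assoc)
  then have "qvar ^ e dvd F1 * D" by (subst (asm) dvd_mult_cancel_left) auto
  then have "qvar ^ e dvd F1" by (rule Suc.IH)
  then show ?case using F1 by (metis mult_dvd_mono dvd_refl power_Suc)
qed

lemma poly_Dp0: "poly (Dp n c) 0 = 1"
proof -
  have "poly (qpoch (qvar^2) k) 0 = 1" for k
    unfolding qpoch_def poly_prod by (rule prod.neutral) auto
  then show ?thesis unfolding Dp_def poly_prod by simp
qed

lemma Fw_closed:
  assumes b: "b \<in> Bset n" and supp: "\<forall>x. x \<notin> Bset n \<longrightarrow> c x = 0" and s: "sum c (Bset n) = j"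
  shows "Fw n j b c = qvar ^ (Qf n c + Sf n b c) * (qpoch (qvar^2) j div Dp n c)"
proof -
  let ?e = "Qf n c + Sf n b c"
  let ?P = "qpoch (qvar^2) j"
  have M: "Fw n j b c * Dp n c = qvar ^ ?e * ?P" using main b supp s by blast
  have D0: "Dp n c \<noteq> 0" using poly_Dp0[of n c] by auto
  have "qvar ^ ?e dvd Fw n j b c * Dp n c" using M by simp
  then have "qvar ^ ?e dvd Fw n j b c" by (rule qpow_dvd[rotated]) (simp add: poly_Dp0)
  then obtain G where G: "Fw n j b c = qvar ^ ?e * G" by (elim dvdE)
  have "qvar ^ ?e * (G * Dp n c) = qvar ^ ?e * ?P" using M G by (simp add: mult.assoc)
  then have "G * Dp n c = ?P" by simp
  then have "?P div Dp n c = G" using D0 by (metis nonzero_mult_div_cancel_right)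
  then show ?thesis using G by simp
qed

lemma int_nat_pred: "int (k * (k - 1)) = int k * (int k - 1)"
  by (cases k) (auto simp: algebra_simps)

theorem mainTheorem17:
  fixes n j :: nat and b :: elt and m :: "nat \<Rightarrow> int"
  assumes "n \<ge> 2" and "b \<in> Bset n"
  shows "g n j b (muwt n m) =
    (\<Sum>\<gamma>\<in>{\<gamma> :: elt \<Rightarrow> int. (\<forall>x. x \<notin> Bset n \<longrightarrow> \<gamma> x = 0) \<and> (\<forall>x\<in>Bset n. \<gamma> x \<ge> 0) \<and>
              (\<forall>i\<in>{1..n}. \<gamma> (U i) - \<gamma> (Bar i) = m i) \<and> (\<Sum>x\<in>Bset n. \<gamma> x) = int j}.
       qvar ^ nat ((\<Sum>i\<in>Bset n - {Z0, Phi}. \<gamma> i * (\<gamma> i - 1))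
                   + (\<Sum>i\<in>Bset n. int (H n b i) * \<gamma> i))
       * qmultinom (qvar ^ 2) (Bset n) j \<gamma>)"
  (is "_ = (\<Sum>\<gamma>\<in>?G. ?R \<gamma>)")
proof -
  note n2 = assms(1) and b = assms(2)
  define A where "A = {xs. length xs = j \<and> set xs \<subseteq> Bset n \<and>
                (\<lambda>k. \<Sum>y\<leftarrow>xs. wt n y k) = muwt n m}"
  define cnt where "cnt (xs :: elt list) = (\<lambda>x. int (count_list xs x))" for xs
  have finA: "finite A"
  proof -
    have "A \<subseteq> {xs. set xs \<subseteq> Bset n \<and> length xs = j}" by (auto simp: A_def)
    then show ?thesis using finite_lists_length_eq[OF finite_Bset] finite_subset by blast
  qed
  have finG: "finite ?G"
  proof -
    have "?G \<subseteq> {\<gamma>. \<forall>x. (x \<in> Bset n \<longrightarrow> \<gamma> x \<in> {0..int j}) \<and> (x \<notin> Bset n \<longrightarrow> \<gamma> x = 0)}"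
    proof (clarify)
      fix \<gamma> :: "elt \<Rightarrow> int" and x
      assume h: "\<forall>x. x \<notin> Bset n \<longrightarrow> \<gamma> x = 0" "\<forall>x\<in>Bset n. 0 \<le> \<gamma> x"
        "\<forall>i\<in>{1..n}. \<gamma> (U i) - \<gamma> (Bar i) = m i" "sum \<gamma> (Bset n) = int j"
      show "(x \<in> Bset n \<longrightarrow> \<gamma> x \<in> {0..int j}) \<and> (x \<notin> Bset n \<longrightarrow> \<gamma> x = 0)"
      proof (intro conjI impI)
        assume x: "x \<in> Bset n"
        have "\<gamma> x \<le> sum \<gamma> (Bset n)" by (rule member_le_sum) (use x h in auto)
        then show "\<gamma> x \<in> {0..int j}" using h x by auto
      next
        assume "x \<notin> Bset n" then show "\<gamma> x = 0" using h by auto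
      qed
    qed
    moreover have "finite {\<gamma>. \<forall>x. (x \<in> Bset n \<longrightarrow> \<gamma> x \<in> {0..int j}) \<and> (x \<notin> Bset n \<longrightarrow> \<gamma> x = 0)}"
      by (rule finite_set_of_finite_funs) auto
    ultimately show ?thesis by (rule finite_subset)
  qed
  have wt_eq: "(\<lambda>k. \<Sum>y\<leftarrow>xs. wt n y k) = muwt n (cntd xs)" if "set xs \<subseteq> Bset n" for xs
    using wt_sum[OF n2 that] by auto
  have img: "cnt ` A \<subseteq> ?G"
  proof
    fix \<gamma> assume "\<gamma> \<in> cnt ` A"
    then obtain xs where xs: "xs \<in> A" and g: "\<gamma> = cnt xs" by auto
    have len: "length xs = j" and st: "set xs \<subseteq> Bset n" and w: "(\<lambda>k. \<Sum>y\<leftarrow>xs. wt n y k) = muwt n m"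
      using xs by (auto simp: A_def)
    have mu: "muwt n (cntd xs) = muwt n m" using w wt_eq[OF st] by simp
    have "cntd xs i = m i" if "i \<in> {1..n}" for i
      using muwt_inj[OF _ mu that] n2 by simp
    moreover have "(\<Sum>x\<in>Bset n. cnt xs x) = int j"
      using sum_count_set[OF st finite_Bset] len by (simp add: cnt_def of_nat_sum[symmetric])
    moreover have "cnt xs x = 0" if "x \<notin> Bset n" for x
      using st that by (auto simp: cnt_def intro!: count_notin)
    ultimately show "\<gamma> \<in> ?G" by (auto simp: g cnt_def cntd_def)
  qed
  have "g n j b (muwt n m) = (\<Sum>xs\<in>A. qvar ^ En n b (rev xs))"
    unfolding g_def A_def[symmetric]
    by (rule sum.cong[OF refl]) (use energy_rev in \<open>auto simp: A_def\<close>)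
  also have "\<dots> = (\<Sum>\<gamma>\<in>?G. \<Sum>xs\<in>{xs. xs \<in> A \<and> cnt xs = \<gamma>}. qvar ^ En n b (rev xs))"
    by (rule sum.group[OF finA finG img, symmetric])
  also have "\<dots> = (\<Sum>\<gamma>\<in>?G. ?R \<gamma>)"
  proof (rule sum.cong[OF refl])
    fix \<gamma> assume "\<gamma> \<in> ?G"
    then have h: "\<forall>x. x \<notin> Bset n \<longrightarrow> \<gamma> x = 0" "\<forall>x\<in>Bset n. 0 \<le> \<gamma> x"
        "\<forall>i\<in>{1..n}. \<gamma> (U i) - \<gamma> (Bar i) = m i" "sum \<gamma> (Bset n) = int j" by auto
    define c where "c x = nat (\<gamma> x)" for x
    have gc: "\<gamma> x = int (c x)" for x using h(1,2) by (cases "x \<in> Bset n") (auto simp: c_def)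
    have csupp: "\<forall>x. x \<notin> Bset n \<longrightarrow> c x = 0" using h(1) by (simp add: c_def)
    have cs: "sum c (Bset n) = j"
    proof -
      have hc: "int (sum c (Bset n)) = sum \<gamma> (Bset n)" by (simp add: gc of_nat_sum)
      show ?thesis using hc h(4) by (metis of_nat_eq_iff)
    qed
    have W: "{xs. xs \<in> A \<and> cnt xs = \<gamma>} = Wd n j c"
    proof (intro set_eqI iffI)
      fix xs assume "xs \<in> {xs. xs \<in> A \<and> cnt xs = \<gamma>}"
      then have "xs \<in> A" "cnt xs = \<gamma>" by auto
      then show "xs \<in> Wd n j c" by (auto simp: A_def Wd_def cnt_def c_def)
    next
      fix xs assume xs: "xs \<in> Wd n j c"
      then have len: "length xs = j" and st: "set xs \<subseteq> Bset n" and ct: "\<forall>x. count_list xs x = c x"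
        by (auto simp: Wd_def)
      have cg: "cnt xs = \<gamma>" using ct gc by (auto simp: cnt_def)
      have "muwt n (cntd xs) = muwt n m"
      proof (rule muwt_cong)
        show "1 \<le> n" using n2 by simp
        fix i assume "i \<in> {1..n}"
        then show "cntd xs i = m i" using h(3) ct gc by (simp add: cntd_def)
      qed
      then show "xs \<in> {xs. xs \<in> A \<and> cnt xs = \<gamma>}" using len st cg wt_eq[OF st] by (simp add: A_def)
    qed
    have revW: "rev ` Wd n j c = Wd n j c"
    proof (intro set_eqI iffI)
      fix xs assume "xs \<in> rev ` Wd n j c" then show "xs \<in> Wd n j c" by (auto simp: Wd_def)
    next
      fix xs assume "xs \<in> Wd n j c"
      then have "rev xs \<in> Wd n j c" by (auto simp: Wd_def)
      then show "xs \<in> rev ` Wd n j c" by (metis image_eqI rev_rev_ident)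
    qed
    have "(\<Sum>xs\<in>{xs. xs \<in> A \<and> cnt xs = \<gamma>}. qvar ^ En n b (rev xs)) = (\<Sum>xs\<in>Wd n j c. qvar ^ En n b (rev xs))"
      by (simp only: W)
    also have "\<dots> = (\<Sum>ws\<in>rev ` Wd n j c. qvar ^ En n b ws)"
      by (subst sum.reindex) (auto simp: inj_on_def o_def)
    also have "\<dots> = Fw n j b c" by (simp add: revW Fw_def)
    also have "\<dots> = qvar ^ (Qf n c + Sf n b c) * (qpoch (qvar^2) j div Dp n c)"
      by (rule Fw_closed[OF b csupp cs])
    also have "\<dots> = ?R \<gamma>"
    proof -
      have e1: "(\<Sum>i\<in>Bset n - {Z0, Phi}. \<gamma> i * (\<gamma> i - 1)) = int (Qf n c)"
        unfolding Qf_def of_nat_sum by (rule sum.cong) (simp_all only: gc int_nat_pred)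
      have e2: "(\<Sum>i\<in>Bset n. int (H n b i) * \<gamma> i) = int (Sf n b c)"
        by (simp add: Sf_def gc)
      have e3: "qmultinom (qvar ^ 2) (Bset n) j \<gamma> = qpoch (qvar^2) j div Dp n c"
        using h(2,4) by (simp add: qmultinom_def Dp_def c_def)
      show ?thesis by (simp only: e1 e2 e3 nat_int of_nat_add[symmetric])
    qed
    finally show "(\<Sum>xs\<in>{xs. xs \<in> A \<and> cnt xs = \<gamma>}. qvar ^ En n b (rev xs)) = ?R \<gamma>" .
  qed
  finally show ?thesis .
qed

end
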